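(* Let $k$ be a domain, $R = k[X_0,\dots,X_m]/J$ a graded domain with $X_0,\dots,X_m$ variables of positive integer weights $A_0,\dots,A_m$ and $J$ a homogeneous ideal, let $A=\operatorname{lcm}(A_0,\dots,A_m)$ and $I=R_{\ge mA}$. Let $p\ge 2$ be an integer. If $I^{p-1}=R_{\ge (p-1)mA}$, then $I^p = R_{\ge pmA}$.
   Context: $R$ is $\mathbb N$-graded via $\deg X_i=A_i$, and $X_i$ also denotes its image in $R$. For a nonnegative integer $\alpha$, $R_{\ge\alpha}$ denotes the ideal of $R$ generated by all homogeneous elements of degree at least $\alpha$. *)

theory Defs
  imports "HOL-Library.Poly_Mapping" "HOL-Algebra.QuotRing" "HOL-Algebra.Ideal_Product"
begin

text \<open>Polynomial ring k[X_i : i in 'n] over a commutative ring k, with finitely many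
  variables indexed by the finite type 'n (so m + 1 = CARD('n)).\<close>

type_synonym ('n, 'k) mpoly = "('n \<Rightarrow>\<^sub>0 nat) \<Rightarrow>\<^sub>0 'k"

definition poly_ring :: "('n, 'k::comm_ring_1) mpoly ring" where
  "poly_ring = \<lparr>carrier = UNIV, monoid.mult = (*), one = 1, zero = 0, add = (+)\<rparr>"

definition Var :: "'n \<Rightarrow> ('n, 'k::comm_ring_1) mpoly" where
  "Var i = Poly_Mapping.single (Poly_Mapping.single i 1) 1"

definition wdeg :: "('n::finite \<Rightarrow> nat) \<Rightarrow> ('n \<Rightarrow>\<^sub>0 nat) \<Rightarrow> nat" where
  "wdeg A a = (\<Sum>i\<in>UNIV. Poly_Mapping.lookup a i * A i)"

definition whomogeneous :: "('n::finite \<Rightarrow> nat) \<Rightarrow> nat \<Rightarrow> ('n, 'k::comm_ring_1) mpoly \<Rightarrow> bool" where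
  "whomogeneous A d f \<longleftrightarrow> (\<forall>a\<in>Poly_Mapping.keys f. wdeg A a = d)"

definition hcomp :: "('n::finite \<Rightarrow> nat) \<Rightarrow> nat \<Rightarrow> ('n, 'k::comm_ring_1) mpoly \<Rightarrow> ('n, 'k) mpoly" where
  "hcomp A d f = Abs_poly_mapping (\<lambda>a. if wdeg A a = d then Poly_Mapping.lookup f a else 0)"

definition homogeneous_ideal :: "('n::finite \<Rightarrow> nat) \<Rightarrow> ('n, 'k::comm_ring_1) mpoly set \<Rightarrow> bool" where
  "homogeneous_ideal A J \<longleftrightarrow> ideal J poly_ring \<and> (\<forall>f\<in>J. \<forall>d. hcomp A d f \<in> J)"

abbreviation quot_ring :: "('n, 'k::comm_ring_1) mpoly set \<Rightarrow> ('n, 'k) mpoly set ring" where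
  "quot_ring J \<equiv> poly_ring Quot J"

definition R_hom :: "('n::finite \<Rightarrow> nat) \<Rightarrow> ('n, 'k::comm_ring_1) mpoly set \<Rightarrow> nat \<Rightarrow> ('n, 'k) mpoly set set" where
  "R_hom A J d = {J +>\<^bsub>poly_ring\<^esub> f | f. whomogeneous A d f}"

definition R_ge :: "('n::finite \<Rightarrow> nat) \<Rightarrow> ('n, 'k::comm_ring_1) mpoly set \<Rightarrow> nat \<Rightarrow> ('n, 'k) mpoly set set" where
  "R_ge A J \<alpha> = genideal (quot_ring J) (\<Union>d\<in>{\<alpha>..}. R_hom A J d)"

abbreviation ideal_power :: "('a, 'b) ring_scheme \<Rightarrow> 'a set \<Rightarrow> nat \<Rightarrow> 'a set" where
  "ideal_power S I n \<equiv> I [^]\<^bsub>ideals_set S\<^esub> n"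

end

theory Submission
  imports Defs
begin


lemma select_le:
  fixes q :: "'n::finite \<Rightarrow> nat"
  shows "k \<le> (\<Sum>i\<in>UNIV. q i) \<Longrightarrow> \<exists>t. (\<forall>i. t i \<le> q i) \<and> (\<Sum>i\<in>UNIV. t i) = k"
proof (induction k)
  case 0
  then show ?case by (intro exI[of _ "\<lambda>_. 0"]) simp
next
  case (Suc k)
  then obtain t where t: "\<forall>i. t i \<le> q i" "(\<Sum>i\<in>UNIV. t i) = k" by auto
  have "\<exists>j. t j < q j"
  proof (rule ccontr)
    assume "\<not> ?thesis"
    then have "\<forall>i. t i = q i" using t(1) by (meson le_less)
    then show False using Suc.prems t(2) by simp
  qed
  then obtain j where j: "t j < q j" by auto
  define t' where "t' = t(j := Suc (t j))"
  have "(\<Sum>i\<in>UNIV. t' i) = Suc (\<Sum>i\<in>UNIV. t i)"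
    unfolding t'_def by (simp add: sum.remove[of UNIV j])
  moreover have "\<forall>i. t' i \<le> q i" using t(1) j unfolding t'_def by simp
  ultimately show ?case using t(2) by blast
qed

lemma split_fun:
  fixes A :: "'n::finite \<Rightarrow> nat" and e :: "'n \<Rightarrow> nat"
  assumes pos: "\<forall>i. A i > 0" and L: "L = Lcm (A ` UNIV)"
    and big: "(k + card (UNIV::'n set) - 1) * L \<le> (\<Sum>i\<in>UNIV. e i * A i)"
  shows "\<exists>t. (\<forall>i. t i \<le> e i) \<and> (\<Sum>i\<in>UNIV. t i * A i) = k * L"
proof -
  define B where "B i = L div A i" for i
  have dv: "A i dvd L" for i using L by (simp add: dvd_Lcm)
  have BA: "B i * A i = L" for i using dv unfolding B_def by simp
  define q where "q i = e i div B i" for i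
  have Lpos: "L > 0" proof -
    have "0 \<notin> A ` UNIV" using pos by (metis imageE less_irrefl)
    then have "Lcm (A ` UNIV) \<noteq> 0" using Lcm_0_iff[OF finite_imageI[OF finite_UNIV, of A]] by blast
    then show ?thesis using L by linarith
  qed
  have Bpos: "B i > 0" for i using BA[of i] Lpos by (cases "B i") auto
  have lt: "e i < (q i + 1) * B i" for i
  proof -
    have "e i = q i * B i + e i mod B i" by (simp add: q_def)
    moreover have "e i mod B i < B i" using Bpos[of i] by simp
    ultimately show ?thesis by (simp add: algebra_simps)
  qed
  have lt2: "e i * A i < (q i + 1) * L" for i
  proof -
    have "e i * A i < (q i + 1) * B i * A i"
      using mult_strict_right_mono[OF lt[of i]] pos by blast
    also have "(q i + 1) * B i * A i = (q i + 1) * L" using BA[of i] by (metis mult.assoc)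
    finally show ?thesis .
  qed
  have "(\<Sum>i\<in>UNIV. e i * A i) < (\<Sum>i\<in>UNIV. (q i + 1) * L)"
    by (rule sum_strict_mono) (simp_all only: lt2 finite_UNIV, simp)
  also have "\<dots> = ((\<Sum>i\<in>UNIV. q i) + card (UNIV::'n set)) * L"
    by (simp add: sum_distrib_right[symmetric] sum_distrib_left[symmetric] sum.distrib algebra_simps)
  finally have "(k + card (UNIV::'n set) - 1) * L < ((\<Sum>i\<in>UNIV. q i) + card (UNIV::'n set)) * L"
    using big by linarith
  then have "k + card (UNIV::'n set) - 1 < (\<Sum>i\<in>UNIV. q i) + card (UNIV::'n set)"
    using mult_less_cancel2 by blast
  then have "k \<le> (\<Sum>i\<in>UNIV. q i)" by linarith
  then obtain t where t: "\<forall>i. t i \<le> q i" "(\<Sum>i\<in>UNIV. t i) = k"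
    using select_le by blast
  show ?thesis
  proof (intro exI[of _ "\<lambda>i. t i * B i"] conjI allI)
    fix i
    have "t i * B i \<le> q i * B i" using t(1) by simp
    also have "\<dots> \<le> e i" unfolding q_def by simp
    finally show "t i * B i \<le> e i" .
  next
    have "(\<Sum>i\<in>UNIV. t i * B i * A i) = (\<Sum>i\<in>UNIV. t i * L)"
      using BA by (simp add: mult.assoc)
    also have "\<dots> = k * L" using t(2) by (simp add: sum_distrib_right[symmetric])
    finally show "(\<Sum>i\<in>UNIV. t i * B i * A i) = k * L" .
  qed
qed



lemma poly_ring_simps [simp]:
  "carrier poly_ring = UNIV" "monoid.mult poly_ring = (*)" "one poly_ring = 1"
  "zero poly_ring = 0" "add poly_ring = (+)"
  by (simp_all add: poly_ring_def)

lemma poly_ring_cring: "cring (poly_ring :: ('n, 'k::comm_ring_1) mpoly ring)"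
proof (rule cringI)
  show "abelian_group (poly_ring :: ('n, 'k::comm_ring_1) mpoly ring)"
    by (rule abelian_groupI) (auto simp: algebra_simps intro: exI[of _ "- _"])
  show "Group.comm_monoid (poly_ring :: ('n, 'k::comm_ring_1) mpoly ring)"
    by (rule comm_monoidI) (auto simp: algebra_simps)
qed (auto simp: distrib_right)

lemma poly_ring_ring: "ring (poly_ring :: ('n, 'k::comm_ring_1) mpoly ring)"
  using poly_ring_cring cring.axioms(1) by blast

lemma poly_a_inv: "a_inv (poly_ring :: ('n, 'k::comm_ring_1) mpoly ring) f = - f"
proof -
  interpret P: cring "poly_ring :: ('n, 'k::comm_ring_1) mpoly ring" by (rule poly_ring_cring)
  show ?thesis by (rule P.minus_equality) auto
qed

lemma wdeg_add: "wdeg A (a + b) = wdeg A a + wdeg A b"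
  by (simp add: wdeg_def lookup_add algebra_simps sum.distrib)

definition Pge :: "('n::finite \<Rightarrow> nat) \<Rightarrow> nat \<Rightarrow> ('n, 'k::comm_ring_1) mpoly set" where
  "Pge A \<alpha> = {f. \<forall>a\<in>Poly_Mapping.keys f. \<alpha> \<le> wdeg A a}"

lemma Pge_mult: "f \<in> Pge A a \<Longrightarrow> g \<in> Pge A b \<Longrightarrow> f * g \<in> Pge A (a + b)"
  unfolding Pge_def using keys_mult[of f g] by (force simp: wdeg_add)

lemma Pge_mult2: "g \<in> Pge A b \<Longrightarrow> f * g \<in> Pge A b"
  using Pge_mult[of f A 0 g b] by (simp add: Pge_def)

lemma Pge_single: "\<alpha> \<le> wdeg A e \<Longrightarrow> Poly_Mapping.single e c \<in> Pge A \<alpha>"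
  unfolding Pge_def by (auto split: if_splits)

lemma Pge_ideal: "ideal (Pge A \<alpha>) (poly_ring :: ('n::finite, 'k::comm_ring_1) mpoly ring)"
proof -
  interpret P: cring "poly_ring :: ('n, 'k::comm_ring_1) mpoly ring" by (rule poly_ring_cring)
  show ?thesis
  proof (rule idealI)
    show "ring (poly_ring :: ('n, 'k::comm_ring_1) mpoly ring)" by (rule P.ring_axioms)
    show "subgroup (Pge A \<alpha>) (add_monoid (poly_ring :: ('n, 'k::comm_ring_1) mpoly ring))"
    proof (rule P.add.subgroupI)
      show "Pge A \<alpha> \<subseteq> carrier poly_ring" by simp
      show "Pge A \<alpha> \<noteq> {}" by (auto simp: Pge_def intro!: exI[of _ 0])
      fix a b :: "('n, 'k) mpoly" assume a: "a \<in> Pge A \<alpha>" and b: "b \<in> Pge A \<alpha>"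
      show "\<ominus>\<^bsub>poly_ring\<^esub> a \<in> Pge A \<alpha>"
        using a poly_a_inv[of a] by (simp add: Pge_def in_keys_iff)
      show "a \<oplus>\<^bsub>poly_ring\<^esub> b \<in> Pge A \<alpha>"
        using a b keys_add[of a b] by (auto simp: Pge_def)
    qed
    fix a x :: "('n, 'k) mpoly" assume a: "a \<in> Pge A \<alpha>"
    show "x \<otimes>\<^bsub>poly_ring\<^esub> a \<in> Pge A \<alpha>" using Pge_mult2[OF a] by simp
    show "a \<otimes>\<^bsub>poly_ring\<^esub> x \<in> Pge A \<alpha>" using Pge_mult2[OF a, of x] by (simp add: mult.commute)
  qed
qed



context
  fixes J :: "('n::finite, 'k::comm_ring_1) mpoly set"
  assumes J: "ideal J poly_ring"
begin

lemma hJ: "(\<lambda>f. J +>\<^bsub>poly_ring\<^esub> f) \<in> ring_hom poly_ring (quot_ring J)"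
  using ideal.rcos_ring_hom[OF J] by simp

lemma qring: "ring (quot_ring J)"
  using ideal.quotient_is_ring[OF J] .

lemma h_add: "J +>\<^bsub>poly_ring\<^esub> (f + g) = (J +>\<^bsub>poly_ring\<^esub> f) \<oplus>\<^bsub>quot_ring J\<^esub> (J +>\<^bsub>poly_ring\<^esub> g)"
  using ring_hom_add[OF hJ, of f g] by simp

lemma h_mult: "J +>\<^bsub>poly_ring\<^esub> (f * g) = (J +>\<^bsub>poly_ring\<^esub> f) \<otimes>\<^bsub>quot_ring J\<^esub> (J +>\<^bsub>poly_ring\<^esub> g)"
  using ring_hom_mult[OF hJ, of f g] by simp

lemma h_zero: "J +>\<^bsub>poly_ring\<^esub> 0 = \<zero>\<^bsub>quot_ring J\<^esub>"
  using ring_hom_zero[OF hJ poly_ring_ring qring] by simp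

lemma h_closed: "J +>\<^bsub>poly_ring\<^esub> f \<in> carrier (quot_ring J)"
  using ring_hom_closed[OF hJ, of f] by simp

lemma monomial_sum:
  "(\<Sum>a\<in>Poly_Mapping.keys f. Poly_Mapping.single a (Poly_Mapping.lookup f a)) = f"
proof (rule poly_mapping_eqI)
  fix k
  show "Poly_Mapping.lookup (\<Sum>a\<in>Poly_Mapping.keys f. Poly_Mapping.single a (Poly_Mapping.lookup f a)) k
        = Poly_Mapping.lookup f k"
    by (simp add: lookup_sum lookup_single when_def in_keys_iff)
qed

lemma span:
  assumes X: "ideal X (quot_ring J)"
    and mono: "\<And>e c. \<alpha> \<le> wdeg A e \<Longrightarrow> J +>\<^bsub>poly_ring\<^esub> Poly_Mapping.single e c \<in> X"
    and f: "f \<in> Pge A \<alpha>"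
  shows "J +>\<^bsub>poly_ring\<^esub> f \<in> X"
proof -
  have "K \<subseteq> Poly_Mapping.keys f \<Longrightarrow>
     J +>\<^bsub>poly_ring\<^esub> (\<Sum>a\<in>K. Poly_Mapping.single a (Poly_Mapping.lookup f a)) \<in> X"
    if "finite K" for K
    using that
  proof (induction K rule: finite_induct)
    case empty
    then show ?case using h_zero additive_subgroup.zero_closed[OF ideal.axioms(1)[OF X]] by simp
  next
    case (insert x F)
    have "x \<in> Poly_Mapping.keys f" using insert by auto
    then have "\<alpha> \<le> wdeg A x" using f by (auto simp: Pge_def)
    then have "J +>\<^bsub>poly_ring\<^esub> Poly_Mapping.single x (Poly_Mapping.lookup f x) \<in> X" by (rule mono)
    moreover have "J +>\<^bsub>poly_ring\<^esub> (\<Sum>a\<in>F. Poly_Mapping.single a (Poly_Mapping.lookup f a)) \<in> X"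
      using insert by auto
    ultimately show ?case using insert
      by (simp add: h_add additive_subgroup.a_closed[OF ideal.axioms(1)[OF X]])
  qed
  from this[of "Poly_Mapping.keys f"] show ?thesis by (simp add: monomial_sum)
qed

lemma R_ge_eq: "R_ge A J \<alpha> = (\<lambda>f. J +>\<^bsub>poly_ring\<^esub> f) ` Pge A \<alpha>"
proof
  have gens: "(\<Union>d\<in>{\<alpha>..}. R_hom A J d) \<subseteq> (\<lambda>f. J +>\<^bsub>poly_ring\<^esub> f) ` Pge A \<alpha>"
    by (auto simp: R_hom_def whomogeneous_def Pge_def)
  have id: "ideal ((\<lambda>f. J +>\<^bsub>poly_ring\<^esub> f) ` Pge A \<alpha>) (quot_ring J)"
    using ring.ring_ideal_imp_quot_ideal[OF poly_ring_ring J Pge_ideal] by simp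
  show "R_ge A J \<alpha> \<subseteq> (\<lambda>f. J +>\<^bsub>poly_ring\<^esub> f) ` Pge A \<alpha>"
    unfolding R_ge_def by (rule ring.genideal_minimal[OF qring id gens])
next
  have carr: "(\<Union>d\<in>{\<alpha>..}. R_hom A J d) \<subseteq> carrier (quot_ring J)"
    using h_closed by (auto simp: R_hom_def)
  have X: "ideal (R_ge A J \<alpha>) (quot_ring J)"
    unfolding R_ge_def by (rule ring.genideal_ideal[OF qring carr])
  show "(\<lambda>f. J +>\<^bsub>poly_ring\<^esub> f) ` Pge A \<alpha> \<subseteq> R_ge A J \<alpha>"
  proof clarify
    fix f :: "('n, 'k) mpoly" assume f: "f \<in> Pge A \<alpha>"
    show "J +>\<^bsub>poly_ring\<^esub> f \<in> R_ge A J \<alpha>"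
    proof (rule span[OF X _ f])
      fix e c assume e: "\<alpha> \<le> wdeg A e"
      have "J +>\<^bsub>poly_ring\<^esub> Poly_Mapping.single e c \<in> R_hom A J (wdeg A e)"
        unfolding R_hom_def whomogeneous_def by (auto split: if_splits)
      then have "J +>\<^bsub>poly_ring\<^esub> Poly_Mapping.single e c \<in> (\<Union>d\<in>{\<alpha>..}. R_hom A J d)"
        using e by auto
      then show "J +>\<^bsub>poly_ring\<^esub> Poly_Mapping.single e c \<in> R_ge A J \<alpha>"
        unfolding R_ge_def using ring.genideal_self[OF qring carr] by blast
    qed
  qed
qed

lemma R_ge_ideal: "ideal (R_ge A J \<alpha>) (quot_ring J)"
  using ring.ring_ideal_imp_quot_ideal[OF poly_ring_ring J Pge_ideal] R_ge_eq by simp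

lemma prod_eq:
  assumes split: "\<And>e. a + b \<le> wdeg A e \<Longrightarrow>
      \<exists>e1 e2. e = e1 + e2 \<and> a \<le> wdeg A e1 \<and> b \<le> wdeg A e2"
  shows "ideal_prod (quot_ring J) (R_ge A J a) (R_ge A J b) = R_ge A J (a + b)"
proof
  show "ideal_prod (quot_ring J) (R_ge A J a) (R_ge A J b) \<subseteq> R_ge A J (a + b)"
  proof
    fix x assume "x \<in> ideal_prod (quot_ring J) (R_ge A J a) (R_ge A J b)"
    then show "x \<in> R_ge A J (a + b)"
    proof (induction x rule: ideal_prod.induct)
      case (prod i j)
      then obtain f g where fg: "f \<in> Pge A a" "g \<in> Pge A b"
        "i = J +>\<^bsub>poly_ring\<^esub> f" "j = J +>\<^bsub>poly_ring\<^esub> g"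
        by (auto simp: R_ge_eq)
      then have "i \<otimes>\<^bsub>quot_ring J\<^esub> j = J +>\<^bsub>poly_ring\<^esub> (f * g)" by (simp add: h_mult)
      moreover have "f * g \<in> Pge A (a + b)" using Pge_mult[OF fg(1,2)] .
      ultimately show ?case by (simp add: R_ge_eq)
    next
      case (sum s1 s2)
      then show ?case
        using additive_subgroup.a_closed[OF ideal.axioms(1)[OF R_ge_ideal]] by blast
    qed
  qed
next
  have X: "ideal (ideal_prod (quot_ring J) (R_ge A J a) (R_ge A J b)) (quot_ring J)"
    by (rule ring.ideal_prod_is_ideal[OF qring R_ge_ideal R_ge_ideal])
  show "R_ge A J (a + b) \<subseteq> ideal_prod (quot_ring J) (R_ge A J a) (R_ge A J b)"
  proof (clarsimp simp: R_ge_eq[of A "a + b"])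
    fix f :: "('n, 'k) mpoly" assume f: "f \<in> Pge A (a + b)"
    show "J +>\<^bsub>poly_ring\<^esub> f \<in> ideal_prod (quot_ring J) (R_ge A J a) (R_ge A J b)"
    proof (rule span[OF X _ f])
      fix e and c :: 'k assume e: "a + b \<le> wdeg A e"
      then obtain e1 e2 where e12: "e = e1 + e2" "a \<le> wdeg A e1" "b \<le> wdeg A e2"
        using split by blast
      have "Poly_Mapping.single e c = Poly_Mapping.single e1 c * Poly_Mapping.single e2 1"
        by (simp add: mult_single e12(1))
      then have eq: "J +>\<^bsub>poly_ring\<^esub> Poly_Mapping.single e c =
          (J +>\<^bsub>poly_ring\<^esub> Poly_Mapping.single e1 c) \<otimes>\<^bsub>quot_ring J\<^esub> (J +>\<^bsub>poly_ring\<^esub> Poly_Mapping.single e2 1)"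
        by (simp add: h_mult)
      have "J +>\<^bsub>poly_ring\<^esub> Poly_Mapping.single e1 c \<in> R_ge A J a"
        using Pge_single[OF e12(2)] by (auto simp: R_ge_eq)
      moreover have "J +>\<^bsub>poly_ring\<^esub> Poly_Mapping.single e2 1 \<in> R_ge A J b"
        using Pge_single[OF e12(3)] by (auto simp: R_ge_eq)
      ultimately show "J +>\<^bsub>poly_ring\<^esub> Poly_Mapping.single e c \<in> ideal_prod (quot_ring J) (R_ge A J a) (R_ge A J b)"
        unfolding eq by (rule ideal_prod.prod)
    qed
  qed
qed

end



theorem mainTheorem2:
  fixes A :: "'n::finite \<Rightarrow> nat"
    and J :: "('n, 'k::idom) mpoly set"
    and m p :: nat
  assumes weights_pos: "\<forall>i. A i > 0"
    and m_def: "m = card (UNIV :: 'n set) - 1"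
    and J_hom: "homogeneous_ideal A J"
    and R_domain: "domain (quot_ring J)"
    and p_ge: "p \<ge> 2"
    and hyp: "ideal_power (quot_ring J) (R_ge A J (m * Lcm (A ` UNIV))) (p - 1)
              = R_ge A J ((p - 1) * m * Lcm (A ` UNIV))"
  shows "ideal_power (quot_ring J) (R_ge A J (m * Lcm (A ` UNIV))) p
         = R_ge A J (p * m * Lcm (A ` UNIV))"
proof -
  have J: "ideal J poly_ring" using J_hom unfolding homogeneous_ideal_def by blast
  define L where "L = Lcm (A ` UNIV)"
  obtain q where q: "p = Suc q" using p_ge by (cases p) auto
  define a where "a = q * m * L"
  define b where "b = m * L"
  have ab: "a + b = p * m * L" unfolding a_def b_def q by (simp add: algebra_simps)
  have split: "\<exists>e1 e2. e = e1 + e2 \<and> a \<le> wdeg A e1 \<and> b \<le> wdeg A e2"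
    if e: "a + b \<le> wdeg A e" for e
  proof -
    have cpos: "card (UNIV::'n set) \<ge> 1" by (simp add: Suc_le_eq card_gt_0_iff)
    have "m + card (UNIV::'n set) - 1 = 2 * m" using m_def cpos by linarith
    then have "(m + card (UNIV::'n set) - 1) * L = 2 * m * L" by simp
    also have "\<dots> \<le> p * m * L" using p_ge by simp
    also have "\<dots> \<le> (\<Sum>i\<in>UNIV. Poly_Mapping.lookup e i * A i)" using e ab by (simp add: wdeg_def)
    finally obtain t where t: "\<forall>i. t i \<le> Poly_Mapping.lookup e i" "(\<Sum>i\<in>UNIV. t i * A i) = m * L"
      using split_fun[OF weights_pos L_def] by blast
    define e2 where "e2 = Abs_poly_mapping t"
    define e1 where "e1 = Abs_poly_mapping (\<lambda>i. Poly_Mapping.lookup e i - t i)"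
    have l2: "Poly_Mapping.lookup e2 = t" by (simp add: e2_def)
    have l1: "Poly_Mapping.lookup e1 = (\<lambda>i. Poly_Mapping.lookup e i - t i)" by (simp add: e1_def)
    have ee: "e = e1 + e2"
      by (rule poly_mapping_eqI) (simp add: lookup_add l1 l2 t(1))
    have w2: "wdeg A e2 = b" using t(2) by (simp add: wdeg_def l2 b_def)
    have "wdeg A e = wdeg A e1 + b" using ee w2 wdeg_add by metis
    then have "a \<le> wdeg A e1" using e by linarith
    then show ?thesis using ee w2 by auto
  qed
  have "ideal_power (quot_ring J) (R_ge A J b) p
      = ideal_prod (quot_ring J) (ideal_power (quot_ring J) (R_ge A J b) q) (R_ge A J b)"
    unfolding q by (simp add: ideals_set_def)
  also have "\<dots> = ideal_prod (quot_ring J) (R_ge A J a) (R_ge A J b)"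
    using hyp unfolding a_def b_def L_def q by simp
  also have "\<dots> = R_ge A J (a + b)" by (rule prod_eq[OF J split])
  finally show ?thesis using ab by (simp add: L_def b_def)
qed

end
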